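(* Let $\Gamma=(U\cup V,E)$ be a $3$-regular bipartite graph and let $\hat\Gamma$, $\eta$, $\eta'$, $\mathrm{sgn}$ and $\mu(F,f)$ be as described in the context. For any $2$-factor $F$ of $\Gamma$, any function $f:F\to\{0,1\}$ and any perfect matchings $\mu_1,\mu_2\in\mu(F,f)$, we have $\mathrm{sgn}(\mu_1)=\mathrm{sgn}(\mu_2)$.
   Context: Construction of $\hat\Gamma$: for each vertex $v$ of $\Gamma$ with neighbours $x,y,z$, there are four inner vertices $a_{v,S}$, one for each subset $S\subseteq\{x,y,z\}$ of even size (the set $I_v$), and six outer vertices $b_{v,u,0},b_{v,u,1}$ for $u\in\{x,y,z\}$ (the set $O_v$). Within the gadget, $a_{v,S}$ is adjacent to $b_{v,u,1}$ if $u\in S$ and to $b_{v,u,0}$ if $u\notin S$. For each edge $e=\{u,v\}\in E$ and $i\in\{0,1\}$ there is an edge $e_i$ joining $b_{v,u,i}$ and $b_{u,v,i}$. No other edges. Let $X=\bigcup_{v\in U}I_v\cup\bigcup_{v\in V}O_v$, $Y=\bigcup_{v\in V}I_v\cup\bigcup_{v\in U}O_v$, $n=|X|=|Y|=10|U|$, and fix bijections $\eta:X\to[n]$, $\eta':Y\to[n]$. A perfect matching is a bijection $\mu:X\to Y$ with $\mu(x)$ adjacent to $x$ for all $x$; $\mathrm{sgn}(\mu)$ is the sign of the permutation $\eta'\circ\mu\circ\eta^{-1}$ of $[n]$. A perfect matching $\mu$ is uniform if for every $e\in E$ at most one of $e_0,e_1$ is in $\mu$; then $F_\mu$ is the set of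 $e\in E$ with exactly one of $e_0,e_1$ in $\mu$, and $f_\mu(e)=i$ iff $e_i\in\mu$. A $2$-factor of $\Gamma$ is a set $F\subseteq E$ such that every vertex is incident to exactly two edges of $F$. $\mu(F,f)$ is the set of uniform perfect matchings $\mu$ with $F_\mu=F$ and $f_\mu=f$. *)

theory Defs
  imports "HOL-Combinatorics.Permutations"
begin

(* Vertices of \<Gamma>-hat:  Inner v S = a_{v,S};  Outer v u i = b_{v,u,i}  (i: False = 0, True = 1) *)
datatype 'v hvert = Inner 'v "'v set" | Outer 'v 'v bool

definition nbrs :: "'v set set \<Rightarrow> 'v \<Rightarrow> 'v set" where
  "nbrs E v = {u. {u, v} \<in> E}"

definition cubic_bipartite :: "'v set \<Rightarrow> 'v set \<Rightarrow> 'v set set \<Rightarrow> bool" where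
  "cubic_bipartite U V E \<longleftrightarrow> finite U \<and> finite V \<and> U \<inter> V = {} \<and>
     E \<subseteq> {{u, v} | u v. u \<in> U \<and> v \<in> V} \<and>
     (\<forall>w \<in> U \<union> V. card (nbrs E w) = 3)"

definition inner_set :: "'v set set \<Rightarrow> 'v \<Rightarrow> 'v hvert set" where
  "inner_set E v = {Inner v S | S. S \<subseteq> nbrs E v \<and> even (card S)}"

definition outer_set :: "'v set set \<Rightarrow> 'v \<Rightarrow> 'v hvert set" where
  "outer_set E v = {Outer v u i | u i. u \<in> nbrs E v}"

definition hat_adj :: "'v set set \<Rightarrow> 'v hvert \<Rightarrow> 'v hvert \<Rightarrow> bool" where
  "hat_adj E x y \<longleftrightarrow>
     (\<exists>v S u i. {x, y} = {Inner v S, Outer v u i} \<and> Inner v S \<in> inner_set E v \<and>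
                u \<in> nbrs E v \<and> (i \<longleftrightarrow> u \<in> S)) \<or>
     (\<exists>u v i. {u, v} \<in> E \<and> {x, y} = {Outer v u i, Outer u v i})"

definition XX :: "'v set \<Rightarrow> 'v set \<Rightarrow> 'v set set \<Rightarrow> 'v hvert set" where
  "XX U V E = (\<Union>v\<in>U. inner_set E v) \<union> (\<Union>v\<in>V. outer_set E v)"

definition YY :: "'v set \<Rightarrow> 'v set \<Rightarrow> 'v set set \<Rightarrow> 'v hvert set" where
  "YY U V E = (\<Union>v\<in>V. inner_set E v) \<union> (\<Union>v\<in>U. outer_set E v)"

definition perfect_matching ::
  "'v set \<Rightarrow> 'v set \<Rightarrow> 'v set set \<Rightarrow> ('v hvert \<Rightarrow> 'v hvert) \<Rightarrow> bool" where
  "perfect_matching U V E \<mu> \<longleftrightarrow> bij_betw \<mu> (XX U V E) (YY U V E) \<and>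
     (\<forall>x \<in> XX U V E. hat_adj E x (\<mu> x))"

(* e_i \<in> \<mu>, for e = {u,v}; the edge e_i joins Outer v u i and Outer u v i *)
definition edge_in ::
  "'v set \<Rightarrow> 'v set \<Rightarrow> 'v set set \<Rightarrow> ('v hvert \<Rightarrow> 'v hvert) \<Rightarrow> 'v set \<Rightarrow> bool \<Rightarrow> bool" where
  "edge_in U V E \<mu> e i \<longleftrightarrow> (\<exists>u v. e = {u, v} \<and> u \<noteq> v \<and>
     ((Outer v u i \<in> XX U V E \<and> \<mu> (Outer v u i) = Outer u v i) \<or>
      (Outer u v i \<in> XX U V E \<and> \<mu> (Outer u v i) = Outer v u i)))"

definition uniform ::
  "'v set \<Rightarrow> 'v set \<Rightarrow> 'v set set \<Rightarrow> ('v hvert \<Rightarrow> 'v hvert) \<Rightarrow> bool" where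
  "uniform U V E \<mu> \<longleftrightarrow> perfect_matching U V E \<mu> \<and>
     (\<forall>e \<in> E. \<not> (edge_in U V E \<mu> e False \<and> edge_in U V E \<mu> e True))"

definition F_of ::
  "'v set \<Rightarrow> 'v set \<Rightarrow> 'v set set \<Rightarrow> ('v hvert \<Rightarrow> 'v hvert) \<Rightarrow> 'v set set" where
  "F_of U V E \<mu> = {e \<in> E. edge_in U V E \<mu> e False \<or> edge_in U V E \<mu> e True}"

(* \<mu>(F,f): f_\<mu> = f on F means e_{f e} \<in> \<mu> for every e \<in> F *)
definition mu_set ::
  "'v set \<Rightarrow> 'v set \<Rightarrow> 'v set set \<Rightarrow> 'v set set \<Rightarrow> ('v set \<Rightarrow> bool) \<Rightarrow> ('v hvert \<Rightarrow> 'v hvert) set" where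
  "mu_set U V E F f = {\<mu>. uniform U V E \<mu> \<and> F_of U V E \<mu> = F \<and>
     (\<forall>e \<in> F. edge_in U V E \<mu> e (f e))}"

definition two_factor :: "'v set \<Rightarrow> 'v set \<Rightarrow> 'v set set \<Rightarrow> 'v set set \<Rightarrow> bool" where
  "two_factor U V E F \<longleftrightarrow> F \<subseteq> E \<and> (\<forall>w \<in> U \<union> V. card {e \<in> F. w \<in> e} = 2)"

(* sgn(\<mu>) = sign of \<eta>' \<circ> \<mu> \<circ> \<eta>^{-1} as a permutation of [n] = {1..n} (identity outside) *)
definition match_sign ::
  "'v set \<Rightarrow> 'v set \<Rightarrow> 'v set set \<Rightarrow> ('v hvert \<Rightarrow> nat) \<Rightarrow> ('v hvert \<Rightarrow> nat)
     \<Rightarrow> ('v hvert \<Rightarrow> 'v hvert) \<Rightarrow> int" where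
  "match_sign U V E \<eta> \<eta>' \<mu> =
     sign (\<lambda>k. if k \<in> {1..card (XX U V E)} then \<eta>' (\<mu> (inv_into (XX U V E) \<eta> k)) else k)"

end

theory Submission
  imports Defs
begin


lemma sign_part:
  assumes fin: "finite N" and p1: "P1 permutes N" and p2: "P2 permutes N"
    and g: "\<And>k. k \<in> N \<Longrightarrow> P1 (g k) = P2 k \<and> g k \<in> N \<and> g (g (g k)) = k"
  shows "sign P1 = sign P2"
proof -
  define t where "t = inv P1 \<circ> P2"
  have tp: "t permutes N" unfolding t_def using p1 p2 by (simp add: permutes_compose permutes_inv)
  have tk: "t k = g k" if "k \<in> N" for k
    using g[OF that] permutes_inverses(2)[OF p1] unfolding t_def by (metis comp_apply)
  have "t \<circ> t \<circ> t = id"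
  proof
    fix k show "(t \<circ> t \<circ> t) k = id k"
    proof (cases "k \<in> N")
      case True thus ?thesis using tk g by auto
    next
      case False thus ?thesis using tp by (simp add: permutes_not_in)
    qed
  qed
  hence "sign (t \<circ> t \<circ> t) = 1" by simp
  moreover have "sign (t \<circ> t \<circ> t) = sign t"
    using tp fin by (simp add: sign_compose permutes_imp_permutation permutation_compose)
  ultimately have st: "sign t = 1" by simp
  have "P2 = P1 \<circ> t" unfolding t_def using permutes_inverses(1)[OF p1] by (auto simp: fun_eq_iff)
  hence "sign P2 = sign P1 * sign t"
    using tp p1 fin by (simp add: sign_compose permutes_imp_permutation)
  thus ?thesis using st by simp
qed



lemma nbrs_sym: "u \<in> nbrs E v \<longleftrightarrow> v \<in> nbrs E u"
  by (simp add: nbrs_def insert_commute)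

lemma nbrs_UV:
  assumes "cubic_bipartite U V E" "u \<in> nbrs E v"
  shows "(v \<in> U \<longrightarrow> u \<in> V) \<and> (v \<in> V \<longrightarrow> u \<in> U) \<and> u \<noteq> v"
proof -
  from assms obtain a b where ab: "{u, v} = {a, b}" "a \<in> U" "b \<in> V" "U \<inter> V = {}"
    unfolding cubic_bipartite_def nbrs_def by blast
  thus ?thesis by (simp add: doubleton_eq_iff) blast
qed

lemma Inner_XX: "Inner w S \<in> XX U V E \<longleftrightarrow> w \<in> U \<and> S \<subseteq> nbrs E w \<and> even (card S)"
  by (auto simp: XX_def inner_set_def outer_set_def)
lemma Outer_XX: "Outer w u i \<in> XX U V E \<longleftrightarrow> w \<in> V \<and> u \<in> nbrs E w"
  by (auto simp: XX_def inner_set_def outer_set_def)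
lemma Inner_YY: "Inner w S \<in> YY U V E \<longleftrightarrow> w \<in> V \<and> S \<subseteq> nbrs E w \<and> even (card S)"
  by (auto simp: YY_def inner_set_def outer_set_def)
lemma Outer_YY: "Outer w u i \<in> YY U V E \<longleftrightarrow> w \<in> U \<and> u \<in> nbrs E w"
  by (auto simp: YY_def inner_set_def outer_set_def)

lemma adj_Inner1: "hat_adj E (Inner v S) q \<Longrightarrow> \<exists>u. u \<in> nbrs E v \<and> q = Outer v u (u \<in> S)"
  unfolding hat_adj_def by (auto simp: doubleton_eq_iff)
lemma adj_Inner2: "hat_adj E p (Inner v S) \<Longrightarrow> \<exists>u. u \<in> nbrs E v \<and> p = Outer v u (u \<in> S)"
  unfolding hat_adj_def by (auto simp: doubleton_eq_iff)

lemma bound_edge: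
  assumes cb: "cubic_bipartite U V E" and mu: "\<mu> \<in> mu_set U V E F f"
    and tf: "two_factor U V E F" and e: "{u, w} \<in> F" and w: "w \<in> V"
  shows "\<mu> (Outer w u (f {u, w})) = Outer u w (f {u, w})"
proof -
  have "edge_in U V E \<mu> {u, w} (f {u, w})" using mu e unfolding mu_set_def by blast
  then obtain u' v' where uv: "{u, w} = {u', v'}" "u' \<noteq> v'"
    "(Outer v' u' (f {u,w}) \<in> XX U V E \<and> \<mu> (Outer v' u' (f {u,w})) = Outer u' v' (f {u,w})) \<or>
     (Outer u' v' (f {u,w}) \<in> XX U V E \<and> \<mu> (Outer u' v' (f {u,w})) = Outer v' u' (f {u,w}))"
    unfolding edge_in_def by blast
  have uU: "u \<in> U" using nbrs_UV[OF cb, of u w] e tf w unfolding two_factor_def nbrs_def by auto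
  have "U \<inter> V = {}" using cb unfolding cubic_bipartite_def by auto
  hence uV: "u \<notin> V" using uU by blast
  from uv(1) have "(u' = u \<and> v' = w) \<or> (u' = w \<and> v' = u)" by (auto simp: doubleton_eq_iff)
  thus ?thesis
  proof
    assume "u' = u \<and> v' = w" thus ?thesis using uv(3) uV by (auto simp: Outer_XX)
  next
    assume "u' = w \<and> v' = u" thus ?thesis using uv(3) uV by (auto simp: Outer_XX)
  qed
qed

lemma free_edge:
  assumes cb: "cubic_bipartite U V E" and mu: "\<mu> \<in> mu_set U V E F f"
    and w: "w \<in> V" and un: "u \<in> nbrs E w"
    and nb: "\<not> ({u, w} \<in> F \<and> i = f {u, w})"
  shows "\<mu> (Outer w u i) \<noteq> Outer u w i"
proof
  assume h: "\<mu> (Outer w u i) = Outer u w i"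
  have "edge_in U V E \<mu> {u, w} i" unfolding edge_in_def
    using h w un nbrs_UV[OF cb un] by (auto simp: Outer_XX)
  moreover have uwE: "{u, w} \<in> E" using un by (simp add: nbrs_def)
  ultimately have "{u, w} \<in> F" using mu unfolding mu_set_def F_of_def by (cases i) auto
  hence "edge_in U V E \<mu> {u, w} (f {u, w})" using mu unfolding mu_set_def by blast
  moreover have "\<not> (edge_in U V E \<mu> {u, w} False \<and> edge_in U V E \<mu> {u, w} True)"
    using mu uwE unfolding mu_set_def uniform_def by blast
  ultimately show False using nb \<open>{u, w} \<in> F\<close> \<open>edge_in U V E \<mu> {u, w} i\<close> by (cases i; cases "f {u, w}") auto
qed

lemma gadget_data:
  assumes cb: "cubic_bipartite U V E" and tf: "two_factor U V E F" and v: "v \<in> U \<union> V"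
  shows "\<exists>x y z. nbrs E v = {x, y, z} \<and> x \<noteq> y \<and> x \<noteq> z \<and> y \<noteq> z \<and>
     {x, v} \<in> F \<and> {y, v} \<in> F \<and> {z, v} \<notin> F"
proof -
  define N where "N = nbrs E v"
  define Fn where "Fn = {u \<in> N. {u, v} \<in> F}"
  have cN: "card N = 3" using cb v unfolding cubic_bipartite_def N_def by blast
  have finN: "finite N" using cN by (metis card.infinite zero_neq_numeral)
  have FE: "F \<subseteq> E" using tf unfolding two_factor_def by blast
  have EUV: "E \<subseteq> {{u, v} | u v. u \<in> U \<and> v \<in> V}" using cb unfolding cubic_bipartite_def by blast
  have eq: "{e \<in> F. v \<in> e} = (\<lambda>u. {u, v}) ` Fn"
  proof
    show "{e \<in> F. v \<in> e} \<subseteq> (\<lambda>u. {u, v}) ` Fn"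
    proof
      fix e assume e: "e \<in> {e \<in> F. v \<in> e}"
      then obtain a b where ab: "e = {a, b}" using FE EUV by blast
      with e have "e = {a, v} \<or> e = {b, v}" by blast
      then obtain u where u: "e = {u, v}" by blast
      have "u \<in> Fn" unfolding Fn_def N_def nbrs_def using e FE u by blast
      thus "e \<in> (\<lambda>u. {u, v}) ` Fn" using u by blast
    qed
  next
    show "(\<lambda>u. {u, v}) ` Fn \<subseteq> {e \<in> F. v \<in> e}" unfolding Fn_def by blast
  qed
  have inj: "inj_on (\<lambda>u. {u, v}) Fn"
  proof (rule inj_onI)
    fix a b assume "a \<in> Fn" "b \<in> Fn" "{a, v} = {b, v}"
    moreover have "a \<noteq> v" using \<open>a \<in> Fn\<close> nbrs_UV[OF cb, of a v] unfolding Fn_def N_def by blast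
    ultimately show "a = b" by (metis doubleton_eq_iff)
  qed
  have "card Fn = 2" using tf v eq card_image[OF inj] unfolding two_factor_def by metis
  then obtain x y where xy: "Fn = {x, y}" "x \<noteq> y" by (meson card_2_iff)
  have FnN: "Fn \<subseteq> N" unfolding Fn_def by blast
  have "card (N - Fn) = card N - card Fn" using finN FnN by (meson card_Diff_subset finite_subset)
  hence "card (N - Fn) = 1" using cN \<open>card Fn = 2\<close> by simp
  then obtain z where z: "N - Fn = {z}" by (meson card_1_singletonE)
  have NN: "N = {x, y, z}" using xy z FnN by blast
  have zF: "z \<notin> Fn" using z by blast
  have "{x, v} \<in> F" "{y, v} \<in> F" using xy unfolding Fn_def by blast+
  moreover have "{z, v} \<notin> F" using zF z unfolding Fn_def by blast
  moreover have "x \<noteq> z" "y \<noteq> z" using zF xy by blast+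
  ultimately show ?thesis using xy(2) NN unfolding N_def by blast
qed



definition Sab :: "'v \<Rightarrow> 'v \<Rightarrow> 'v \<Rightarrow> bool \<Rightarrow> bool \<Rightarrow> 'v set" where
  "Sab x y z p q = (if p then {x} else {}) \<union> (if q then {y} else {}) \<union> (if p \<noteq> q then {z} else {})"

lemma Sab_mem:
  assumes "x \<noteq> y" "x \<noteq> z" "y \<noteq> z"
  shows "x \<in> Sab x y z p q \<longleftrightarrow> p" "y \<in> Sab x y z p q \<longleftrightarrow> q" "z \<in> Sab x y z p q \<longleftrightarrow> p \<noteq> q"
  using assms by (auto simp: Sab_def)

lemma Sab_inj:
  assumes "x \<noteq> y" "x \<noteq> z" "y \<noteq> z" "Sab x y z p q = Sab x y z p' q'"
  shows "p = p' \<and> q = q'"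
  using Sab_mem[OF assms(1-3)] assms(4) by metis

lemma Sab_sub: "Sab x y z p q \<subseteq> {x, y, z}" by (auto simp: Sab_def)

lemma Sab_even:
  assumes "x \<noteq> y" "x \<noteq> z" "y \<noteq> z"
  shows "even (card (Sab x y z p q))"
  using assms by (cases p; cases q) (auto simp: Sab_def)

lemma Sab_all:
  assumes d: "x \<noteq> y" "x \<noteq> z" "y \<noteq> z" and sub: "S \<subseteq> {x, y, z}" and ev: "even (card S)"
  shows "S = Sab x y z (x \<in> S) (y \<in> S)"
proof -
  have par: "z \<in> S \<longleftrightarrow> (x \<in> S) \<noteq> (y \<in> S)"
  proof (cases "x \<in> S"; cases "y \<in> S"; cases "z \<in> S")
    assume "x \<in> S" "y \<in> S" "z \<in> S" hence "S = {x,y,z}" using sub by blast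
    thus ?thesis using ev d by simp
  next
    assume "x \<notin> S" "y \<notin> S" "z \<in> S" hence "S = {z}" using sub by blast
    thus ?thesis using ev d by simp
  next
    assume "x \<in> S" "y \<notin> S" "z \<notin> S" hence "S = {x}" using sub by blast
    thus ?thesis using ev d by simp
  next
    assume "x \<notin> S" "y \<in> S" "z \<notin> S" hence "S = {y}" using sub by blast
    thus ?thesis using ev d by simp
  qed simp_all
  show ?thesis
  proof (rule set_eqI)
    fix w show "w \<in> S \<longleftrightarrow> w \<in> Sab x y z (x \<in> S) (y \<in> S)"
      using sub par unfolding Sab_def by auto
  qed
qed

lemma local_match:
  fixes m :: "'v hvert \<Rightarrow> 'v hvert"
  assumes d: "x \<noteq> y" "x \<noteq> z" "y \<noteq> z"
    and adj: "\<And>p q. \<exists>u\<in>{x,y,z}. m (Inner v (Sab x y z p q)) = Outer v u (u \<in> Sab x y z p q)"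
    and nbx: "\<And>p q. m (Inner v (Sab x y z p q)) \<noteq> Outer v x a"
    and nby: "\<And>p q. m (Inner v (Sab x y z p q)) \<noteq> Outer v y b"
    and inj: "\<And>p q p' q'. m (Inner v (Sab x y z p q)) = m (Inner v (Sab x y z p' q')) \<Longrightarrow> p = p' \<and> q = q'"
  shows "(m (Inner v (Sab x y z a b)) = Outer v z (a \<noteq> b) \<and>
          m (Inner v (Sab x y z (\<not>a) (\<not>b))) = Outer v x (\<not>a) \<and>
          m (Inner v (Sab x y z (\<not>a) b)) = Outer v z (a = b) \<and>
          m (Inner v (Sab x y z a (\<not>b))) = Outer v y (\<not>b)) \<or>
         (m (Inner v (Sab x y z a b)) = Outer v z (a \<noteq> b) \<and>
          m (Inner v (Sab x y z (\<not>a) (\<not>b))) = Outer v y (\<not>b) \<and>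
          m (Inner v (Sab x y z (\<not>a) b)) = Outer v x (\<not>a) \<and>
          m (Inner v (Sab x y z a (\<not>b))) = Outer v z (a = b))"
proof -
  note mem = Sab_mem[OF d]
  obtain u0 where u0: "u0 \<in> {x,y,z}" "m (Inner v (Sab x y z a b)) = Outer v u0 (u0 \<in> Sab x y z a b)" using adj by blast
  obtain u1 where u1: "u1 \<in> {x,y,z}" "m (Inner v (Sab x y z (\<not>a) (\<not>b))) = Outer v u1 (u1 \<in> Sab x y z (\<not>a) (\<not>b))" using adj by blast
  obtain u2 where u2: "u2 \<in> {x,y,z}" "m (Inner v (Sab x y z (\<not>a) b)) = Outer v u2 (u2 \<in> Sab x y z (\<not>a) b)" using adj by blast
  obtain u3 where u3: "u3 \<in> {x,y,z}" "m (Inner v (Sab x y z a (\<not>b))) = Outer v u3 (u3 \<in> Sab x y z a (\<not>b))" using adj by blast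
  have n01: "m (Inner v (Sab x y z a b)) \<noteq> m (Inner v (Sab x y z (\<not>a) (\<not>b)))" using inj by blast
  have n02: "m (Inner v (Sab x y z a b)) \<noteq> m (Inner v (Sab x y z (\<not>a) b))" using inj by blast
  have n03: "m (Inner v (Sab x y z a b)) \<noteq> m (Inner v (Sab x y z a (\<not>b)))" using inj by blast
  have n12: "m (Inner v (Sab x y z (\<not>a) (\<not>b))) \<noteq> m (Inner v (Sab x y z (\<not>a) b))" using inj by blast
  have n13: "m (Inner v (Sab x y z (\<not>a) (\<not>b))) \<noteq> m (Inner v (Sab x y z a (\<not>b)))" using inj by blast
  have n23: "m (Inner v (Sab x y z (\<not>a) b)) \<noteq> m (Inner v (Sab x y z a (\<not>b)))" using inj by blast
  have x0: "u0 = z" using u0 nbx[of a b] nby[of a b] mem by auto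
  have x1: "u1 = x \<or> u1 = y" using u1 u0 x0 n01 mem by auto
  have x2: "u2 = x \<or> u2 = z" using u2 nby[of "\<not>a" b] mem by auto
  have x3: "u3 = y \<or> u3 = z" using u3 nbx[of a "\<not>b"] mem by auto
  show ?thesis
  proof (cases "u1 = x")
    case True
    hence "u2 = z" using x2 u1 u2 n12 mem by auto
    hence "u3 = y" using x3 u2 u3 n23 mem by auto
    thus ?thesis using True \<open>u2 = z\<close> x0 u0 u1 u2 u3 mem by auto
  next
    case False
    hence "u1 = y" using x1 by blast
    hence "u3 = z" using x3 u1 u3 n13 mem by auto
    hence "u2 = x" using x2 u2 u3 n23 mem by auto
    thus ?thesis using \<open>u1 = y\<close> \<open>u3 = z\<close> x0 u0 u1 u2 u3 mem by auto
  qed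
qed



definition mt :: "'a set \<Rightarrow> ('a \<Rightarrow> 'b) \<Rightarrow> 'a \<Rightarrow> 'b \<Rightarrow> bool" where
  "mt X g p q \<longleftrightarrow> g p = q \<and> inv_into X g q = p"

definition gopt :: "('a \<Rightarrow> 'b \<Rightarrow> bool) \<Rightarrow> 'a \<Rightarrow> 'a \<Rightarrow> 'a \<Rightarrow> 'a \<Rightarrow> 'b \<Rightarrow> 'b \<Rightarrow> 'b \<Rightarrow> 'b \<Rightarrow> bool" where
  "gopt M A0 A1 A2 A3 O0 O1 O2 O3 \<longleftrightarrow>
     (M A0 O0 \<and> M A1 O1 \<and> M A2 O2 \<and> M A3 O3) \<or> (M A0 O0 \<and> M A1 O3 \<and> M A2 O1 \<and> M A3 O2)"

lemma local_gopt:
  fixes m :: "'v hvert \<Rightarrow> 'v hvert"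
  assumes d: "x \<noteq> y" "x \<noteq> z" "y \<noteq> z"
    and adj: "\<And>p q. \<exists>u\<in>{x,y,z}. m (Inner v (Sab x y z p q)) = Outer v u (u \<in> Sab x y z p q)"
    and nbx: "\<And>p q. m (Inner v (Sab x y z p q)) \<noteq> Outer v x a"
    and nby: "\<And>p q. m (Inner v (Sab x y z p q)) \<noteq> Outer v y b"
    and inj: "\<And>p q p' q'. m (Inner v (Sab x y z p q)) = m (Inner v (Sab x y z p' q')) \<Longrightarrow> p = p' \<and> q = q'"
    and M: "\<And>p q. M (Inner v (Sab x y z p q)) (m (Inner v (Sab x y z p q)))"
  shows "gopt M (Inner v (Sab x y z a b)) (Inner v (Sab x y z (\<not>a) (\<not>b)))
     (Inner v (Sab x y z (\<not>a) b)) (Inner v (Sab x y z a (\<not>b)))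
     (Outer v z (a \<noteq> b)) (Outer v x (\<not>a)) (Outer v z (a = b)) (Outer v y (\<not>b))"
  using local_match[OF d adj nbx nby inj] M unfolding gopt_def by metis

lemma gadget_U:
  assumes cb: "cubic_bipartite U V E" and tf: "two_factor U V E F" and mu: "\<mu> \<in> mu_set U V E F f"
    and v: "v \<in> U" and N: "nbrs E v = {x, y, z}" and d: "x \<noteq> y" "x \<noteq> z" "y \<noteq> z"
    and Fx: "{x, v} \<in> F" and Fy: "{y, v} \<in> F"
  shows "gopt (mt (XX U V E) \<mu>) (Inner v (Sab x y z (f {x, v}) (f {y, v}))) (Inner v (Sab x y z (\<not>f {x, v}) (\<not>f {y, v})))
     (Inner v (Sab x y z (\<not>f {x, v}) (f {y, v}))) (Inner v (Sab x y z (f {x, v}) (\<not>f {y, v})))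
     (Outer v z (f {x, v} \<noteq> f {y, v})) (Outer v x (\<not>f {x, v})) (Outer v z (f {x, v} = f {y, v})) (Outer v y (\<not>f {y, v}))"
proof -
  have pm: "perfect_matching U V E \<mu>" using mu unfolding mu_set_def uniform_def by blast
  hence bij: "bij_betw \<mu> (XX U V E) (YY U V E)" and ad: "\<And>p. p \<in> XX U V E \<Longrightarrow> hat_adj E p (\<mu> p)"
    unfolding perfect_matching_def by auto
  have injm: "inj_on \<mu> (XX U V E)" using bij bij_betw_def by blast
  have inX: "Inner v (Sab x y z p q) \<in> XX U V E" for p q
    using v N Sab_sub[of x y z p q] Sab_even[OF d] by (simp add: Inner_XX)
  have xV: "x \<in> V" "y \<in> V" using nbrs_UV[OF cb, of x v] nbrs_UV[OF cb, of y v] v N by auto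
  have nb: "\<mu> (Inner v (Sab x y z p q)) \<noteq> Outer v w (f {w, v})" if w: "w = x \<or> w = y" for w p q
  proof
    assume h: "\<mu> (Inner v (Sab x y z p q)) = Outer v w (f {w, v})"
    have wV: "w \<in> V" using w xV by blast
    have "{v, w} \<in> F" using w Fx Fy by (auto simp: insert_commute)
    from bound_edge[OF cb mu tf this wV] have "\<mu> (Outer w v (f {w, v})) = Outer v w (f {w, v})"
      by (simp add: insert_commute)
    moreover have "Outer w v (f {w, v}) \<in> XX U V E" using wV w N nbrs_sym[of v E] by (auto simp: Outer_XX)
    ultimately show False using h injm inX[of p q] by (metis inj_onD hvert.distinct(1))
  qed
  show ?thesis
  proof (rule local_gopt[OF d])
    fix p q
    obtain u where "u \<in> nbrs E v" "\<mu> (Inner v (Sab x y z p q)) = Outer v u (u \<in> Sab x y z p q)"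
      using adj_Inner1[OF ad[OF inX[of p q]]] by blast
    thus "\<exists>u\<in>{x,y,z}. \<mu> (Inner v (Sab x y z p q)) = Outer v u (u \<in> Sab x y z p q)" using N by blast
  next
    fix p q show "\<mu> (Inner v (Sab x y z p q)) \<noteq> Outer v x (f {x, v})" using nb by blast
  next
    fix p q show "\<mu> (Inner v (Sab x y z p q)) \<noteq> Outer v y (f {y, v})" using nb by blast
  next
    fix p q p' q' assume "\<mu> (Inner v (Sab x y z p q)) = \<mu> (Inner v (Sab x y z p' q'))"
    hence "Sab x y z p q = Sab x y z p' q'" using injm inX by (metis inj_onD hvert.inject(1))
    thus "p = p' \<and> q = q'" using Sab_inj[OF d] by blast
  next
    fix p q show "mt (XX U V E) \<mu> (Inner v (Sab x y z p q)) (\<mu> (Inner v (Sab x y z p q)))"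
      unfolding mt_def using injm inX by (simp add: inv_into_f_f)
  qed
qed

lemma gadget_V:
  assumes cb: "cubic_bipartite U V E" and tf: "two_factor U V E F" and mu: "\<mu> \<in> mu_set U V E F f"
    and v: "v \<in> V" and N: "nbrs E v = {x, y, z}" and d: "x \<noteq> y" "x \<noteq> z" "y \<noteq> z"
    and Fx: "{x, v} \<in> F" and Fy: "{y, v} \<in> F"
  shows "gopt (\<lambda>p q. mt (XX U V E) \<mu> q p) (Inner v (Sab x y z (f {x, v}) (f {y, v}))) (Inner v (Sab x y z (\<not>f {x, v}) (\<not>f {y, v})))
     (Inner v (Sab x y z (\<not>f {x, v}) (f {y, v}))) (Inner v (Sab x y z (f {x, v}) (\<not>f {y, v})))
     (Outer v z (f {x, v} \<noteq> f {y, v})) (Outer v x (\<not>f {x, v})) (Outer v z (f {x, v} = f {y, v})) (Outer v y (\<not>f {y, v}))"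
proof -
  have pm: "perfect_matching U V E \<mu>" using mu unfolding mu_set_def uniform_def by blast
  hence bij: "bij_betw \<mu> (XX U V E) (YY U V E)" and ad: "\<And>p. p \<in> XX U V E \<Longrightarrow> hat_adj E p (\<mu> p)"
    unfolding perfect_matching_def by auto
  define im where "im = inv_into (XX U V E) \<mu>"
  have img: "\<mu> ` XX U V E = YY U V E" using bij by (simp add: bij_betw_def)
  have inY: "Inner v (Sab x y z p q) \<in> YY U V E" for p q
    using v N Sab_sub[of x y z p q] Sab_even[OF d] by (simp add: Inner_YY)
  have imX: "im (Inner v (Sab x y z p q)) \<in> XX U V E" for p q
    unfolding im_def using inY img by (metis inv_into_into)
  have mim: "\<mu> (im (Inner v (Sab x y z p q))) = Inner v (Sab x y z p q)" for p q
    unfolding im_def using inY img by (metis f_inv_into_f)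
  have injim: "inj_on im (YY U V E)" unfolding im_def using img by (simp add: inj_on_inv_into)
  have xU: "x \<in> U" "y \<in> U" using nbrs_UV[OF cb, of x v] nbrs_UV[OF cb, of y v] v N by auto
  have nb: "im (Inner v (Sab x y z p q)) \<noteq> Outer v w (f {w, v})" if w: "w = x \<or> w = y" for w p q
  proof
    assume h: "im (Inner v (Sab x y z p q)) = Outer v w (f {w, v})"
    have "{w, v} \<in> F" using w Fx Fy by auto
    from bound_edge[OF cb mu tf this v] have "\<mu> (Outer v w (f {w, v})) = Outer w v (f {w, v})" .
    thus False using h mim[of p q] by simp
  qed
  show ?thesis
  proof (rule local_gopt[OF d, where m = im])
    fix p q
    obtain u where "u \<in> nbrs E v" "im (Inner v (Sab x y z p q)) = Outer v u (u \<in> Sab x y z p q)"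
      using adj_Inner2[of E "im (Inner v (Sab x y z p q))" v] ad[OF imX[of p q]] mim[of p q] by auto
    thus "\<exists>u\<in>{x,y,z}. im (Inner v (Sab x y z p q)) = Outer v u (u \<in> Sab x y z p q)" using N by blast
  next
    fix p q show "im (Inner v (Sab x y z p q)) \<noteq> Outer v x (f {x, v})" using nb by blast
  next
    fix p q show "im (Inner v (Sab x y z p q)) \<noteq> Outer v y (f {y, v})" using nb by blast
  next
    fix p q p' q' assume "im (Inner v (Sab x y z p q)) = im (Inner v (Sab x y z p' q'))"
    hence "Sab x y z p q = Sab x y z p' q'" using injim inY by (metis inj_onD hvert.inject(1))
    thus "p = p' \<and> q = q'" using Sab_inj[OF d] by blast
  next
    fix p q show "mt (XX U V E) \<mu> (im (Inner v (Sab x y z p q))) (Inner v (Sab x y z p q))"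
      unfolding mt_def using mim im_def by simp
  qed
qed



lemma core:
  assumes cb: "cubic_bipartite U V E" and tf: "two_factor U V E F"
    and m1: "\<mu>1 \<in> mu_set U V E F f" and m2: "\<mu>2 \<in> mu_set U V E F f"
    and w: "w \<in> XX U V E"
  shows "inv_into (XX U V E) \<mu>1 (\<mu>2 (inv_into (XX U V E) \<mu>1 (\<mu>2 (inv_into (XX U V E) \<mu>1 (\<mu>2 w))))) = w"
proof (cases w)
  case (Inner v S)
  have v: "v \<in> U" and S: "S \<subseteq> nbrs E v" "even (card S)" using w Inner by (auto simp: Inner_XX)
  obtain x y z where N: "nbrs E v = {x, y, z}" and d: "x \<noteq> y" "x \<noteq> z" "y \<noteq> z"
    and Fx: "{x, v} \<in> F" and Fy: "{y, v} \<in> F" using gadget_data[OF cb tf] v by blast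
  define a where "a = f {x, v}"
  define b where "b = f {y, v}"
  define A0 where "A0 = Inner v (Sab x y z a b)"
  define A1 where "A1 = Inner v (Sab x y z (\<not>a) (\<not>b))"
  define A2 where "A2 = Inner v (Sab x y z (\<not>a) b)"
  define A3 where "A3 = Inner v (Sab x y z a (\<not>b))"
  define O0 where "O0 = Outer v z (a \<noteq> b)"
  define O1 where "O1 = Outer v x (\<not>a)"
  define O2 where "O2 = Outer v z (a = b)"
  define O3 where "O3 = Outer v y (\<not>b)"
  have g1: "gopt (mt (XX U V E) \<mu>1) A0 A1 A2 A3 O0 O1 O2 O3"
    unfolding A0_def A1_def A2_def A3_def O0_def O1_def O2_def O3_def a_def b_def
    by (rule gadget_U[OF cb tf m1 v N d Fx Fy])
  have g2: "gopt (mt (XX U V E) \<mu>2) A0 A1 A2 A3 O0 O1 O2 O3"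
    unfolding A0_def A1_def A2_def A3_def O0_def O1_def O2_def O3_def a_def b_def
    by (rule gadget_U[OF cb tf m2 v N d Fx Fy])
  have SS: "S = Sab x y z (x \<in> S) (y \<in> S)" using Sab_all[OF d] S N by simp
  have wc: "w = A0 \<or> w = A1 \<or> w = A2 \<or> w = A3"
    unfolding A0_def A1_def A2_def A3_def Inner using SS
    by (cases a; cases b; cases "x \<in> S"; cases "y \<in> S") auto
  show ?thesis using g1 g2 wc unfolding gopt_def mt_def by auto
next
  case (Outer v u i)
  have v: "v \<in> V" and u: "u \<in> nbrs E v" using w Outer by (auto simp: Outer_XX)
  obtain x y z where N: "nbrs E v = {x, y, z}" and d: "x \<noteq> y" "x \<noteq> z" "y \<noteq> z"
    and Fx: "{x, v} \<in> F" and Fy: "{y, v} \<in> F" using gadget_data[OF cb tf] v by blast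
  define a where "a = f {x, v}"
  define b where "b = f {y, v}"
  show ?thesis
  proof (cases "(u = x \<and> i = a) \<or> (u = y \<and> i = b)")
    case True
    hence Fu: "{u, v} \<in> F" and iu: "i = f {u, v}" using Fx Fy a_def b_def by auto
    have e1: "\<mu>1 w = \<mu>2 w" using bound_edge[OF cb m1 tf Fu v] bound_edge[OF cb m2 tf Fu v] Outer iu by simp
    have inj1: "inj_on \<mu>1 (XX U V E)" using m1 unfolding mu_set_def uniform_def perfect_matching_def bij_betw_def by blast
    have "inv_into (XX U V E) \<mu>1 (\<mu>2 w) = w" using e1 inj1 w by (metis inv_into_f_f)
    thus ?thesis by simp
  next
    case False
    define A0 where "A0 = Inner v (Sab x y z a b)"
    define A1 where "A1 = Inner v (Sab x y z (\<not>a) (\<not>b))"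
    define A2 where "A2 = Inner v (Sab x y z (\<not>a) b)"
    define A3 where "A3 = Inner v (Sab x y z a (\<not>b))"
    define O0 where "O0 = Outer v z (a \<noteq> b)"
    define O1 where "O1 = Outer v x (\<not>a)"
    define O2 where "O2 = Outer v z (a = b)"
    define O3 where "O3 = Outer v y (\<not>b)"
    have g1: "gopt (\<lambda>p q. mt (XX U V E) \<mu>1 q p) A0 A1 A2 A3 O0 O1 O2 O3"
      unfolding A0_def A1_def A2_def A3_def O0_def O1_def O2_def O3_def a_def b_def
      by (rule gadget_V[OF cb tf m1 v N d Fx Fy])
    have g2: "gopt (\<lambda>p q. mt (XX U V E) \<mu>2 q p) A0 A1 A2 A3 O0 O1 O2 O3"
      unfolding A0_def A1_def A2_def A3_def O0_def O1_def O2_def O3_def a_def b_def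
      by (rule gadget_V[OF cb tf m2 v N d Fx Fy])
    have wc: "w = O0 \<or> w = O1 \<or> w = O2 \<or> w = O3"
      unfolding O0_def O1_def O2_def O3_def Outer using False u N
      by (cases a; cases b; cases i) auto
    show ?thesis using g1 g2 wc unfolding gopt_def mt_def by auto
  qed
qed


theorem mainTheorem4:
  fixes U V :: "'v set" and E :: "'v set set"
    and \<eta> \<eta>' :: "'v hvert \<Rightarrow> nat"
    and F :: "'v set set" and f :: "'v set \<Rightarrow> bool"
    and \<mu>1 \<mu>2 :: "'v hvert \<Rightarrow> 'v hvert"
  assumes "cubic_bipartite U V E"
    and "bij_betw \<eta> (XX U V E) {1..card (XX U V E)}"
    and "bij_betw \<eta>' (YY U V E) {1..card (XX U V E)}"
    and "two_factor U V E F"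
    and "\<mu>1 \<in> mu_set U V E F f" and "\<mu>2 \<in> mu_set U V E F f"
  shows "match_sign U V E \<eta> \<eta>' \<mu>1 = match_sign U V E \<eta> \<eta>' \<mu>2"
proof -
  note cb = assms(1) and he = assms(2) and he' = assms(3) and tf = assms(4) and m1 = assms(5) and m2 = assms(6)
  define X where "X = XX U V E"
  define N where "N = {1..card X}"
  define P1 where "P1 = (\<lambda>k. if k \<in> N then \<eta>' (\<mu>1 (inv_into X \<eta> k)) else k)"
  define P2 where "P2 = (\<lambda>k. if k \<in> N then \<eta>' (\<mu>2 (inv_into X \<eta> k)) else k)"
  have bm1: "bij_betw \<mu>1 X (YY U V E)" using m1 unfolding X_def mu_set_def uniform_def perfect_matching_def by blast
  have bm2: "bij_betw \<mu>2 X (YY U V E)" using m2 unfolding X_def mu_set_def uniform_def perfect_matching_def by blast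
  have hi: "bij_betw (inv_into X \<eta>) N X" using he unfolding X_def N_def by (rule bij_betw_inv_into)
  have he2: "bij_betw \<eta>' (YY U V E) N" using he' unfolding X_def N_def .
  have perm: "(\<lambda>k. if k \<in> N then \<eta>' (\<mu> (inv_into X \<eta> k)) else k) permutes N"
    if bm: "bij_betw \<mu> X (YY U V E)" for \<mu>
  proof (rule bij_imp_permutes)
    have "bij_betw (\<eta>' \<circ> \<mu> \<circ> inv_into X \<eta>) N N"
      using bij_betw_trans[OF bij_betw_trans[OF hi bm] he2] by (simp add: comp_assoc)
    thus "bij_betw (\<lambda>k. if k \<in> N then \<eta>' (\<mu> (inv_into X \<eta> k)) else k) N N"
      by (rule bij_betw_cong[THEN iffD1, rotated]) auto
  qed auto
  have p1: "P1 permutes N" unfolding P1_def by (rule perm[OF bm1])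
  have p2: "P2 permutes N" unfolding P2_def by (rule perm[OF bm2])
  define \<sigma> where "\<sigma> = (\<lambda>w. inv_into X \<mu>1 (\<mu>2 w))"
  define g where "g = (\<lambda>k. \<eta> (\<sigma> (inv_into X \<eta> k)))"
  have sX: "\<sigma> w \<in> X" and s1: "\<mu>1 (\<sigma> w) = \<mu>2 w" if "w \<in> X" for w
  proof -
    have "\<mu>2 w \<in> \<mu>1 ` X" using bm1 bm2 that by (metis bij_betw_apply bij_betw_imp_surj_on)
    thus "\<sigma> w \<in> X" "\<mu>1 (\<sigma> w) = \<mu>2 w" unfolding \<sigma>_def by (auto intro: inv_into_into f_inv_into_f)
  qed
  have s3: "\<sigma> (\<sigma> (\<sigma> w)) = w" if "w \<in> X" for w
    unfolding \<sigma>_def X_def using core[OF cb tf m1 m2] that X_def by blast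
  have ieta: "inv_into X \<eta> (\<eta> w) = w" if "w \<in> X" for w
    using he that unfolding X_def by (meson bij_betw_imp_inj_on inv_into_f_f)
  have etaN: "\<eta> w \<in> N" if "w \<in> X" for w using he that unfolding X_def N_def by (meson bij_betw_apply)
  have gk: "P1 (g k) = P2 k \<and> g k \<in> N \<and> g (g (g k)) = k" if k: "k \<in> N" for k
  proof -
    define w where "w = inv_into X \<eta> k"
    have wX: "w \<in> X" using hi k unfolding w_def by (meson bij_betw_apply)
    have ew: "\<eta> w = k" using he k unfolding w_def X_def N_def by (metis bij_betw_def f_inv_into_f)
    have gw: "g k = \<eta> (\<sigma> w)" unfolding g_def w_def ..
    have "P1 (g k) = P2 k" unfolding P1_def P2_def gw using etaN[OF sX[OF wX]] k ieta[OF sX[OF wX]] s1[OF wX]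
      by (simp add: w_def[symmetric])
    moreover have "g k \<in> N" using gw etaN[OF sX[OF wX]] by simp
    moreover have "g (g (g k)) = k"
      using gw ew s3[OF wX] ieta sX wX unfolding g_def by (simp add: w_def[symmetric])
    ultimately show ?thesis by blast
  qed
  have "sign P1 = sign P2" using sign_part[of N P1 P2 g] p1 p2 gk unfolding N_def by simp
  thus ?thesis unfolding match_sign_def P1_def P2_def N_def X_def .
qed

end
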